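(* Let $r\ge1$, $\alpha\ge1$, and let $Y_1,\dots,Y_k$ be i.i.d. nonnegative random variables with $\|Y_1\|_{2r}\le\alpha\|Y_1\|_r$. If $k\ge 4\alpha^{2r}$, then \[ \mathbb{E}\Bigl(\sum_{i=1}^k Y_i^r\Bigr)^{1/r}\ge\frac{1}{128\alpha^2}\,k^{1/r}\|Y_1\|_r . \]
   Context: $\|Y\|_\rho=(\mathbb{E}|Y|^\rho)^{1/\rho}$. *)

theory Defs
  imports "HOL-Probability.Probability"
begin

definition Lnorm :: "'a measure \<Rightarrow> real \<Rightarrow> ('a \<Rightarrow> real) \<Rightarrow> real" where
  "Lnorm M \<rho> Y = (\<integral>x. \<bar>Y x\<bar> powr \<rho> \<partial>M) powr (1 / \<rho>)"

end

theory Submission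
  imports Defs
begin
lemma pw1: fixes u r :: real assumes "0 \<le> u" "1 \<le> r" shows "u - u\<^sup>2/4 \<le> u powr (1/r)"
proof (cases "u \<le> 1")
  case True
  have "u powr 1 \<le> u powr (1/r)" using assms True by (intro powr_mono') auto
  moreover have "u powr 1 = u" using assms by (cases "u = 0") auto
  moreover have "0 \<le> u\<^sup>2/4" by simp
  ultimately show ?thesis by linarith
next
  case False
  have "1 \<le> u powr (1/r)" using False assms by (intro ge_one_powr_ge_zero) auto
  moreover have "u - u\<^sup>2/4 \<le> 1" using sum_squares_ge_zero[of "u-2" 0]
    by (simp add: power2_eq_square algebra_simps)
  ultimately show ?thesis by linarith
qed

lemma pw2: fixes s r :: real assumes "0 \<le> s" "1 \<le> r" shows "s powr (1/r) \<le> 1 + s"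
proof (cases "s \<le> 1")
  case True
  have "s powr (1/r) \<le> 1 powr (1/r)" using True assms by (intro powr_mono2) auto
  then show ?thesis using assms by simp
next
  case False
  have "s powr (1/r) \<le> s powr 1" using False assms by (intro powr_mono) auto
  then show ?thesis using False by simp
qed

lemma pw3: fixes s r a :: real assumes "0 \<le> s" "1 \<le> r" "0 < a"
  shows "a powr (1/r) * (s/a - s\<^sup>2/(4*a\<^sup>2)) \<le> s powr (1/r)"
proof -
  have "s powr (1/r) = (a * (s/a)) powr (1/r)" using assms by simp
  also have "\<dots> = a powr (1/r) * (s/a) powr (1/r)" using assms by (simp only: powr_mult[symmetric]) 
  finally have e: "s powr (1/r) = a powr (1/r) * (s/a) powr (1/r)" .
  have "s/a - (s/a)\<^sup>2/4 \<le> (s/a) powr (1/r)" using assms by (intro pw1) auto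
  moreover have "(s/a)\<^sup>2/4 = s\<^sup>2/(4*a\<^sup>2)" by (simp add: power_divide)
  ultimately have "s/a - s\<^sup>2/(4*a\<^sup>2) \<le> (s/a) powr (1/r)" by simp
  then show ?thesis unfolding e by (intro mult_left_mono) auto
qed
theorem mainTheorem12:
  fixes M :: "'a measure" and Y :: "nat \<Rightarrow> 'a \<Rightarrow> real"
    and r \<alpha> :: real and k :: nat
  assumes "prob_space M"
    and "r \<ge> 1" and "\<alpha> \<ge> 1"
    and meas: "\<And>i. i < k \<Longrightarrow> Y i \<in> borel_measurable M"
    and indep: "prob_space.indep_vars M (\<lambda>_. borel) Y {..<k}"
    and ident: "\<And>i. i < k \<Longrightarrow> distr M borel (Y i) = distr M borel (Y 0)"
    and nonneg: "\<And>i x. i < k \<Longrightarrow> x \<in> space M \<Longrightarrow> Y i x \<ge> 0"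
    and moment: "integrable M (\<lambda>x. \<bar>Y 0 x\<bar> powr (2 * r))"
    and hyp: "Lnorm M (2 * r) (Y 0) \<le> \<alpha> * Lnorm M r (Y 0)"
    and kbig: "real k \<ge> 4 * \<alpha> powr (2 * r)"
  shows "(\<integral>x. (\<Sum>i<k. Y i x powr r) powr (1 / r) \<partial>M)
           \<ge> 1 / (128 * \<alpha>\<^sup>2) * real k powr (1 / r) * Lnorm M r (Y 0)"
proof -
  interpret P: prob_space M by fact
  have r1: "r \<ge> 1" by fact
  have a1: "\<alpha> \<ge> 1" by fact
  have "\<alpha> powr (2*r) \<ge> 1" using a1 r1 by (intro ge_one_powr_ge_zero) auto
  then have k4: "real k \<ge> 4" using kbig by linarith
  then have k0: "0 < k" by simp
  have m0[measurable]: "Y 0 \<in> borel_measurable M" using meas k0 by auto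
  have transfer_int: "integrable M (\<lambda>x. g (Y i x)) \<longleftrightarrow> integrable M (\<lambda>x. g (Y 0 x))"
    and transfer_eq: "(\<integral>x. g (Y i x) \<partial>M) = (\<integral>x. g (Y 0 x) \<partial>M)"
    if "i < k" "g \<in> borel_measurable borel" for i and g :: "real \<Rightarrow> real"
  proof -
    have mi: "Y i \<in> measurable M borel" using meas that by auto
    show "integrable M (\<lambda>x. g (Y i x)) \<longleftrightarrow> integrable M (\<lambda>x. g (Y 0 x))"
      using integrable_distr_eq[OF mi that(2)] integrable_distr_eq[OF m0 that(2)] ident[OF that(1)]
      by simp
    show "(\<integral>x. g (Y i x) \<partial>M) = (\<integral>x. g (Y 0 x) \<partial>M)"
      using integral_distr[OF mi that(2)] integral_distr[OF m0 that(2)] ident[OF that(1)]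
      by simp
  qed
  define Z where "Z i x = Y i x powr r" for i x
  define m where "m = (\<integral>x. \<bar>Y 0 x\<bar> powr r \<partial>M)"
  define q where "q = (\<integral>x. \<bar>Y 0 x\<bar> powr (2*r) \<partial>M)"
  have int_r0: "integrable M (\<lambda>x. \<bar>Y 0 x\<bar> powr r)"
  proof (rule Bochner_Integration.integrable_bound[where f="\<lambda>x. 1 + \<bar>Y 0 x\<bar> powr (2 * r)"])
    show "integrable M (\<lambda>x. 1 + \<bar>Y 0 x\<bar> powr (2 * r))" using moment by simp
    show "(\<lambda>x. \<bar>Y 0 x\<bar> powr r) \<in> borel_measurable M" by measurable
    show "AE x in M. norm (\<bar>Y 0 x\<bar> powr r) \<le> norm (1 + \<bar>Y 0 x\<bar> powr (2 * r))"
    proof (intro AE_I2)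
      fix x
      have "\<bar>Y 0 x\<bar> powr r \<le> 1 + \<bar>Y 0 x\<bar> powr (2 * r)"
      proof (cases "\<bar>Y 0 x\<bar> \<le> 1")
        case True
        then have "\<bar>Y 0 x\<bar> powr r \<le> 1 powr r" using r1 by (intro powr_mono2) auto
        moreover have "0 \<le> \<bar>Y 0 x\<bar> powr (2 * r)" by simp
        ultimately show ?thesis by (simp only: powr_one_eq_one)
      next
        case False
        then have "\<bar>Y 0 x\<bar> powr r \<le> \<bar>Y 0 x\<bar> powr (2*r)" using r1 by (intro powr_mono) auto
        then show ?thesis by simp
      qed
      then show "norm (\<bar>Y 0 x\<bar> powr r) \<le> norm (1 + \<bar>Y 0 x\<bar> powr (2 * r))" by simp
    qed
  qed
  have Zint: "integrable M (Z i)" and ZE: "(\<integral>x. Z i x \<partial>M) = m" if "i < k" for i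
  proof -
    have g: "(\<lambda>y::real. \<bar>y\<bar> powr r) \<in> borel_measurable borel" by measurable
    have e: "\<And>x. x \<in> space M \<Longrightarrow> Z i x = \<bar>Y i x\<bar> powr r" using nonneg[OF that] by (simp add: Z_def)
    have "integrable M (\<lambda>x. \<bar>Y i x\<bar> powr r)" using transfer_int[OF that g] int_r0 by simp
    moreover have "integrable M (Z i) = integrable M (\<lambda>x. \<bar>Y i x\<bar> powr r)"
      by (rule Bochner_Integration.integrable_cong) (auto simp: e)
    ultimately show "integrable M (Z i)" by simp
    have "(\<integral>x. Z i x \<partial>M) = (\<integral>x. \<bar>Y i x\<bar> powr r \<partial>M)" by (rule Bochner_Integration.integral_cong) (auto simp: e)
    also have "\<dots> = m" using transfer_eq[OF that g] by (simp add: m_def)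
    finally show "(\<integral>x. Z i x \<partial>M) = m" .
  qed
  have ZZint: "integrable M (\<lambda>x. Z i x * Z i x)" and ZZE: "(\<integral>x. Z i x * Z i x \<partial>M) = q" if "i < k" for i
  proof -
    have g: "(\<lambda>y::real. \<bar>y\<bar> powr (2*r)) \<in> borel_measurable borel" by measurable
    have e: "\<And>x. x \<in> space M \<Longrightarrow> Z i x * Z i x = \<bar>Y i x\<bar> powr (2*r)"
      using nonneg[OF that] by (simp add: Z_def powr_add[symmetric])
    have "integrable M (\<lambda>x. \<bar>Y i x\<bar> powr (2*r))" using transfer_int[OF that g] moment by simp
    moreover have "integrable M (\<lambda>x. Z i x * Z i x) = integrable M (\<lambda>x. \<bar>Y i x\<bar> powr (2*r))"
      by (rule Bochner_Integration.integrable_cong) (auto simp: e)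
    ultimately show "integrable M (\<lambda>x. Z i x * Z i x)" by simp
    have "(\<integral>x. Z i x * Z i x \<partial>M) = (\<integral>x. \<bar>Y i x\<bar> powr (2*r) \<partial>M)" by (rule Bochner_Integration.integral_cong) (auto simp: e)
    also have "\<dots> = q" using transfer_eq[OF that g] by (simp add: q_def)
    finally show "(\<integral>x. Z i x * Z i x \<partial>M) = q" .
  qed
  have Zind: "P.indep_vars (\<lambda>_. borel) Z {..<k}"
    unfolding Z_def by (rule P.indep_vars_compose2[OF indep]) measurable
  have ZZij: "integrable M (\<lambda>x. Z i x * Z j x) \<and> (\<integral>x. Z i x * Z j x \<partial>M) = m * m"
    if "i < k" "j < k" "i \<noteq> j" for i j
  proof -
    have ind2: "P.indep_vars (\<lambda>_. borel) Z {i, j}"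
      using that by (intro P.indep_vars_subset[OF Zind]) auto
    have ints: "\<And>l. l \<in> {i,j} \<Longrightarrow> integrable M (Z l)" using that Zint by auto
    have "integrable M (\<lambda>x. \<Prod>l\<in>{i,j}. Z l x)"
      by (rule P.indep_vars_integrable[OF _ ind2 ints]) auto
    moreover have "(\<integral>x. (\<Prod>l\<in>{i,j}. Z l x) \<partial>M) = (\<Prod>l\<in>{i,j}. \<integral>x. Z l x \<partial>M)"
      by (rule P.indep_vars_lebesgue_integral[OF _ ind2 ints]) auto
    ultimately show ?thesis using that ZE by simp
  qed
  have ZZ: "integrable M (\<lambda>x. Z i x * Z j x)" "(\<integral>x. Z i x * Z j x \<partial>M) \<le> m * m + (if i = j then q else 0)"
    if "i < k" "j < k" for i j
  proof -
    have "m * m \<ge> 0" by simp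
    then show "integrable M (\<lambda>x. Z i x * Z j x)" "(\<integral>x. Z i x * Z j x \<partial>M) \<le> m * m + (if i = j then q else 0)"
      using ZZij[OF that] ZZint[OF that(1)] ZZE[OF that(1)] by (cases "i = j"; simp)+
  qed
  define S where "S x = (\<Sum>i<k. Z i x)" for x
  have Snn: "S x \<ge> 0" if "x \<in> space M" for x
    unfolding S_def Z_def by (intro sum_nonneg) simp
  have Sint: "integrable M S" unfolding S_def using Zint by (intro Bochner_Integration.integrable_sum) auto
  have SE: "(\<integral>x. S x \<partial>M) = real k * m"
    unfolding S_def using Zint ZE by (subst Bochner_Integration.integral_sum) auto
  have S2: "\<And>x. (S x)\<^sup>2 = (\<Sum>i<k. \<Sum>j<k. Z i x * Z j x)"
    unfolding S_def power2_eq_square by (simp add: sum_product)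
  have S2int: "integrable M (\<lambda>x. (S x)\<^sup>2)"
    unfolding S2 using ZZ by (intro Bochner_Integration.integrable_sum) auto
  have "(\<integral>x. (S x)\<^sup>2 \<partial>M) = (\<Sum>i<k. \<Sum>j<k. \<integral>x. Z i x * Z j x \<partial>M)"
    unfolding S2
  proof (subst Bochner_Integration.integral_sum)
    show "\<And>i. i \<in> {..<k} \<Longrightarrow> integrable M (\<lambda>x. \<Sum>j<k. Z i x * Z j x)"
      using ZZ by (intro Bochner_Integration.integrable_sum) auto
    show "(\<Sum>i<k. \<integral>x. (\<Sum>j<k. Z i x * Z j x) \<partial>M) = (\<Sum>i<k. \<Sum>j<k. \<integral>x. Z i x * Z j x \<partial>M)"
      using ZZ by (intro sum.cong refl Bochner_Integration.integral_sum) auto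
  qed
  also have "\<dots> \<le> (\<Sum>i<k. \<Sum>j<k. m * m + (if i = j then q else 0))"
    using ZZ by (intro sum_mono) auto
  also have "\<dots> = real k * real k * m * m + real k * q"
    by (simp add: sum.distrib algebra_simps)
  finally have S2E: "(\<integral>x. (S x)\<^sup>2 \<partial>M) \<le> real k * real k * m * m + real k * q" .
  have mnn: "m \<ge> 0" unfolding m_def by (intro Bochner_Integration.integral_nonneg) auto
  have qnn: "q \<ge> 0" unfolding q_def by (intro Bochner_Integration.integral_nonneg) auto
  have Lr: "Lnorm M r (Y 0) = m powr (1/r)" by (simp add: Lnorm_def m_def)
  have L2r: "Lnorm M (2*r) (Y 0) = q powr (1/(2*r))" by (simp add: Lnorm_def q_def)
  have qb: "q \<le> \<alpha> powr (2*r) * m\<^sup>2"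
  proof -
    have "(q powr (1/(2*r))) powr (2*r) \<le> (\<alpha> * m powr (1/r)) powr (2*r)"
      using hyp r1 unfolding Lr L2r by (intro powr_mono2) auto
    moreover have "(q powr (1/(2*r))) powr (2*r) = q" using r1 qnn by (simp add: powr_powr)
    moreover have "(\<alpha> * m powr (1/r)) powr (2*r) = \<alpha> powr (2*r) * m\<^sup>2"
    proof -
      have "(\<alpha> * m powr (1/r)) powr (2*r) = \<alpha> powr (2*r) * (m powr (1/r)) powr (2*r)"
        using a1 mnn by (simp add: powr_mult)
      also have "(m powr (1/r)) powr (2*r) = m powr 2" using r1 by (simp add: powr_powr)
      also have "m powr 2 = m\<^sup>2" using mnn by simp
      finally show ?thesis .
    qed
    ultimately show ?thesis by simp
  qed
  show ?thesis
  proof (cases "m = 0")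
    case True
    have "0 \<le> (\<integral>x. (\<Sum>i<k. Y i x powr r) powr (1 / r) \<partial>M)"
      by (intro Bochner_Integration.integral_nonneg) auto
    then show ?thesis using True Lr by simp
  next
    case False
    then have mpos: "m > 0" using mnn by simp
    define a where "a = real k * m"
    have apos: "a > 0" using mpos k0 by (simp add: a_def)
    have LHS: "(\<integral>x. (\<Sum>i<k. Y i x powr r) powr (1 / r) \<partial>M) = (\<integral>x. S x powr (1/r) \<partial>M)"
      by (simp add: S_def Z_def)
    have Srint: "integrable M (\<lambda>x. S x powr (1/r))"
    proof (rule Bochner_Integration.integrable_bound[where f="\<lambda>x. 1 + S x"])
      show "integrable M (\<lambda>x. 1 + S x)" using Sint by simp
      have [measurable]: "S \<in> borel_measurable M" using Sint by auto
      show "(\<lambda>x. S x powr (1/r)) \<in> borel_measurable M" by measurable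
      show "AE x in M. norm (S x powr (1/r)) \<le> norm (1 + S x)"
        using Snn pw2[OF _ r1] by (intro AE_I2) auto
    qed
    have "(\<integral>x. a powr (1/r) * (S x / a - (S x)\<^sup>2 / (4 * a\<^sup>2)) \<partial>M) \<le> (\<integral>x. S x powr (1/r) \<partial>M)"
      using Sint S2int Srint Snn pw3[OF _ r1 apos] by (intro Bochner_Integration.integral_mono) auto
    moreover have "(\<integral>x. a powr (1/r) * (S x / a - (S x)\<^sup>2 / (4 * a\<^sup>2)) \<partial>M)
        = a powr (1/r) * ((\<integral>x. S x \<partial>M) / a - (\<integral>x. (S x)\<^sup>2 \<partial>M) / (4 * a\<^sup>2))"
      using Sint S2int by simp
    moreover have "(\<integral>x. S x \<partial>M) / a = 1" using SE apos k0 mpos by (simp add: a_def)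
    moreover have "(\<integral>x. (S x)\<^sup>2 \<partial>M) / (4 * a\<^sup>2) \<le> 5/16"
    proof -
      have "real k * q \<le> real k * (\<alpha> powr (2*r) * m\<^sup>2)" using qb by (intro mult_left_mono) auto
      also have "\<dots> \<le> real k * (real k / 4 * m\<^sup>2)"
      proof (intro mult_left_mono)
        show "\<alpha> powr (2*r) * m\<^sup>2 \<le> real k / 4 * m\<^sup>2" using kbig by (intro mult_right_mono) auto
      qed auto
      finally have "(\<integral>x. (S x)\<^sup>2 \<partial>M) \<le> 5/16 * (4 * a\<^sup>2)"
        using S2E by (simp add: a_def power2_eq_square algebra_simps)
      then show ?thesis using apos by (simp add: divide_le_eq)
    qed
    ultimately have "a powr (1/r) * (11/16) \<le> (\<integral>x. S x powr (1/r) \<partial>M)"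
    proof -
      assume A: "(\<integral>x. a powr (1/r) * (S x / a - (S x)\<^sup>2 / (4 * a\<^sup>2)) \<partial>M) \<le> (\<integral>x. S x powr (1/r) \<partial>M)"
        "(\<integral>x. a powr (1/r) * (S x / a - (S x)\<^sup>2 / (4 * a\<^sup>2)) \<partial>M)
        = a powr (1/r) * ((\<integral>x. S x \<partial>M) / a - (\<integral>x. (S x)\<^sup>2 \<partial>M) / (4 * a\<^sup>2))"
        "(\<integral>x. S x \<partial>M) / a = 1" "(\<integral>x. (S x)\<^sup>2 \<partial>M) / (4 * a\<^sup>2) \<le> 5/16"
      have "a powr (1/r) * (11/16) \<le> a powr (1/r) * ((\<integral>x. S x \<partial>M) / a - (\<integral>x. (S x)\<^sup>2 \<partial>M) / (4 * a\<^sup>2))"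
        using A(3,4) by (intro mult_left_mono) auto
      then show ?thesis using A(1,2) by linarith
    qed
    moreover have "a powr (1/r) = real k powr (1/r) * m powr (1/r)"
      unfolding a_def using mnn by (simp add: powr_mult)
    moreover have "1 / (128 * \<alpha>\<^sup>2) \<le> 11/16"
    proof -
      have "\<alpha>\<^sup>2 \<ge> 1" using a1 by (simp add: one_le_power)
      then show ?thesis by (simp add: divide_le_eq)
    qed
    moreover have "real k powr (1/r) * m powr (1/r) \<ge> 0" by simp
    ultimately have "1 / (128 * \<alpha>\<^sup>2) * (real k powr (1/r) * m powr (1/r)) \<le> (\<integral>x. S x powr (1/r) \<partial>M)"
      by (smt (verit) mult_right_mono mult.commute)
    then show ?thesis using LHS Lr by (simp add: mult.assoc)
  qed
qed
end
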